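(* Let $n$ and $0<\delta\le1$ be such that $\delta n/2$ and $n/2$ are integers, let $W=\{w_1,\dots,w_n\}$, $M=\{m_1,\dots,m_n\}$, and let $\bar x=(x^i_j)$, $\bar y=(y^i_j)$, $1\le i,j\le\delta n/2$, be bit arrays with $\mathrm{DISJ}(\bar x,\bar y)=1$. Then the marriage market with the preferences $P(\bar x,\bar y)$ described in the context has a unique stable marriage, namely $\mu_1=\{(m_i,w_{i+n/2}) : 1\le i\le n/2\}\cup\{(m_{i+n/2},w_i): 1\le i\le n/2\}$.
   Context: Participants are split into high ($w_1,\dots,w_{\delta n/2}$; $m_1,\dots,m_{\delta n/2}$), mid (indices $\delta n/2+1,\dots,n/2$) and low (indices $n/2+1,\dots,n$). Preferences $P(\bar x,\bar y)$: each low woman ranks $m_1\succ m_2\succ\dots\succ m_n$ and each low man ranks $w_1\succ\dots\succ w_n$. Each mid woman ranks $m_{n/2+1}\succ\dots\succ m_n\succ m_1\succ\dots\succ m_{n/2}$ (low, then high, then mid, each in index order), and mid men symmetrically over women. A high woman $w_i$ ranks, in order: the high men $m_j$ with $x^i_j=1$; then all low men; then all mid men; then the high men $m_j$ with $x^i_j=0$; within each group by increasing index. A high man $m_j$ ranks: high women $w_i$ with $y^i_j=1$; all low women; all mid women; high women $w_i$ with $y^i_j=0$; within each group by increasing index. All lists are full. A perfect marriage is stable if there is no pair $(w,m)$ each preferring the other to their spouse. $\mathrm{DISJ}(\bar x,\bar y)=1$ iff there is no $(i,j)$ with $x^i_j=y^i_j=1$. *)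

theory Defs
  imports Complex_Main
begin

text \<open>Participants: women w_1..w_n and men m_1..m_n, represented by their indices in {1..n}.
  k = delta*n/2 is the number of high participants on each side; indices 1..k are high,
  k+1..n/2 are mid, n/2+1..n are low.\<close>

definition key_w :: "nat \<Rightarrow> nat \<Rightarrow> (nat \<Rightarrow> nat \<Rightarrow> bool) \<Rightarrow> nat \<Rightarrow> nat \<Rightarrow> nat \<times> nat" where
  "key_w n k x i j =
     (if n div 2 < i then (0, j)                       \<comment> \<open>low woman: m_1 > m_2 > ... > m_n\<close>
      else if k < i then                               \<comment> \<open>mid woman: low, then high, then mid\<close>
        (if n div 2 < j then (0, j) else if j \<le> k then (1, j) else (2, j))
      else                                             \<comment> \<open>high woman w_i\<close>
        (if j \<le> k \<and> x i j then (0, j)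
         else if n div 2 < j then (1, j)
         else if k < j then (2, j)
         else (3, j)))"

definition key_m :: "nat \<Rightarrow> nat \<Rightarrow> (nat \<Rightarrow> nat \<Rightarrow> bool) \<Rightarrow> nat \<Rightarrow> nat \<Rightarrow> nat \<times> nat" where
  "key_m n k y j i =
     (if n div 2 < j then (0, i)
      else if k < j then
        (if n div 2 < i then (0, i) else if i \<le> k then (1, i) else (2, i))
      else
        (if i \<le> k \<and> y i j then (0, i)
         else if n div 2 < i then (1, i)
         else if k < i then (2, i)
         else (3, i)))"

definition lex_less :: "nat \<times> nat \<Rightarrow> nat \<times> nat \<Rightarrow> bool" where
  "lex_less a b \<longleftrightarrow> fst a < fst b \<or> (fst a = fst b \<and> snd a < snd b)"

definition w_prefers where
  "w_prefers n k x i j j' \<longleftrightarrow> lex_less (key_w n k x i j) (key_w n k x i j')"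

definition m_prefers where
  "m_prefers n k y j i i' \<longleftrightarrow> lex_less (key_m n k y j i) (key_m n k y j i')"

definition perfect_marriage :: "nat \<Rightarrow> (nat \<Rightarrow> nat) \<Rightarrow> bool" where
  "perfect_marriage n mu \<longleftrightarrow> bij_betw mu {1..n} {1..n}"

definition stable :: "nat \<Rightarrow> nat \<Rightarrow> (nat \<Rightarrow> nat \<Rightarrow> bool) \<Rightarrow> (nat \<Rightarrow> nat \<Rightarrow> bool) \<Rightarrow> (nat \<Rightarrow> nat) \<Rightarrow> bool" where
  "stable n k x y mu \<longleftrightarrow> perfect_marriage n mu \<and>
     \<not> (\<exists>i\<in>{1..n}. \<exists>j\<in>{1..n}.
           w_prefers n k x i j (mu i) \<and>
           m_prefers n k y j i (inv_into {1..n} mu j))"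

definition DISJ :: "nat \<Rightarrow> (nat \<Rightarrow> nat \<Rightarrow> bool) \<Rightarrow> (nat \<Rightarrow> nat \<Rightarrow> bool) \<Rightarrow> bool" where
  "DISJ k x y \<longleftrightarrow> \<not> (\<exists>i\<in>{1..k}. \<exists>j\<in>{1..k}. x i j \<and> y i j)"

text \<open>mu_1: m_i -- w_{i+n/2} and m_{i+n/2} -- w_i, as a map from women to husbands.\<close>
definition mu1 :: "nat \<Rightarrow> nat \<Rightarrow> nat" where
  "mu1 n i = (if i \<le> n div 2 then i + n div 2 else i - n div 2)"

end

theory Submission
  imports Defs
begin

lemma block:
  assumes st: "stable n k x y mu" and i: "i\<in>{1..n}" and r: "r\<in>{1..n}"
    and wp: "w_prefers n k x i (mu r) (mu i)" and mp: "m_prefers n k y (mu r) i r"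
  shows False
proof -
  have b: "bij_betw mu {1..n} {1..n}" using st by (simp add: stable_def perfect_marriage_def)
  hence inj: "inj_on mu {1..n}" by (simp add: bij_betw_def)
  have mr: "mu r \<in> {1..n}" using b r by (meson bij_betwE)
  have "inv_into {1..n} mu (mu r) = r" using inj r by (simp add: inv_into_f_f)
  thus False using st i mr wp mp unfolding stable_def by metis
qed

lemma cross:
  assumes st: "stable n k x y mu" and kh: "k \<le> n div 2" and D: "DISJ k x y"
    and i: "i\<in>{1..n div 2}"
  shows "n div 2 < mu i"
proof (rule ccontr)
  define h where "h = n div 2"
  assume "\<not> n div 2 < mu i"
  hence jh: "mu i \<le> h" by (simp add: h_def)
  have b: "bij_betw mu {1..n} {1..n}" using st by (simp add: stable_def perfect_marriage_def)
  hence inj: "inj_on mu {1..n}" by (simp add: bij_betw_def)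
  have iin: "i \<in> {1..n}" using i by auto
  have mi: "mu i \<in> {1..n}" using b iin by (meson bij_betwE)
  have "\<exists>a\<in>{h+1..n}. h < mu a"
  proof (rule ccontr)
    assume "\<not> ?thesis"
    hence all: "\<forall>a\<in>{h+1..n}. mu a \<le> h" by auto
    have sub: "mu ` {h+1..n} \<subseteq> {1..h} - {mu i}"
    proof
      fix z assume "z \<in> mu ` {h+1..n}"
      then obtain a where a: "a \<in> {h+1..n}" "z = mu a" by auto
      have ain: "a \<in> {1..n}" using a by auto
      have "mu a \<in> {1..n}" using b ain by (meson bij_betwE)
      moreover have "a \<noteq> i" using a i by (auto simp: h_def)
      hence "mu a \<noteq> mu i" using inj ain iin by (meson inj_on_eq_iff)
      ultimately show "z \<in> {1..h} - {mu i}" using a all by auto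
    qed
    have "card (mu ` {h+1..n}) = card {h+1..n}"
      by (rule card_image) (rule inj_on_subset[OF inj], auto)
    moreover have "card (mu ` {h+1..n}) \<le> card ({1..h} - {mu i})"
      by (rule card_mono[OF _ sub]) auto
    moreover have "card ({1..h} - {mu i}) = h - 1" using mi jh by simp
    moreover have "h \<ge> 1" using i by (auto simp: h_def)
    ultimately show False by (simp add: h_def)
  qed
  then obtain a where a: "a \<in> {h+1..n}" "h < mu a" by auto
  have ain: "a \<in> {1..n}" using a by auto
  have mab: "mu a \<in> {1..n}" using b ain by (meson bij_betwE)
  have ih: "i \<le> h" using i by (simp add: h_def)
  show False
  proof (cases "k < i \<or> \<not> (mu i \<le> k \<and> x i (mu i))")
    case True
    have "w_prefers n k x i (mu a) (mu i)"
      using True a jh ih kh mi by (auto simp: w_prefers_def key_w_def lex_less_def h_def)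
    moreover have "m_prefers n k y (mu a) i a"
      using a ih kh by (auto simp: m_prefers_def key_m_def lex_less_def h_def)
    ultimately show False using block[OF st iin ain] by blast
  next
    case False
    hence ik: "i \<le> k" and jk: "mu i \<le> k" and xij: "x i (mu i)" by auto
    have "\<not> y i (mu i)" using D ik jk xij mi i unfolding DISJ_def by auto
    have "w_prefers n k x a (mu i) (mu a)"
      using a jh ih kh mi by (auto simp: w_prefers_def key_w_def lex_less_def h_def)
    moreover have "m_prefers n k y (mu i) a i"
      using a ih kh ik jk mi \<open>\<not> y i (mu i)\<close>
      by (auto simp: m_prefers_def key_m_def lex_less_def h_def)
    ultimately show False using block[OF st ain iin] by blast
  qed
qed

lemma partB:
  assumes st: "stable n k x y mu" and kh: "k \<le> n div 2" and D: "DISJ k x y"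
  shows "t \<in> {1..n div 2} \<Longrightarrow> mu t = t + n div 2"
proof (induction t rule: less_induct)
  case (less t)
  define h where "h = n div 2"
  have b: "bij_betw mu {1..n} {1..n}" using st by (simp add: stable_def perfect_marriage_def)
  hence inj: "inj_on mu {1..n}" by (simp add: bij_betw_def)
  have tin: "t \<in> {1..n}" using less.prems by auto
  have mt: "mu t \<in> {1..n}" using b tin by (meson bij_betwE)
  have c1: "h < mu t" using cross[OF st kh D less.prems] by (simp add: h_def)
  have c2: "\<not> mu t < t + h"
  proof
    assume "mu t < t + h"
    then obtain s where s: "mu t = s + h" "s < t" using c1
      by (metis add.commute less_imp_add_positive nat_add_left_cancel_less)
    have s1: "s \<ge> 1" using s c1 by simp
    have "mu s = s + h" using less.IH[of s] s s1 less.prems by (auto simp: h_def)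
    hence "mu s = mu t" using s by simp
    moreover have "s \<in> {1..n}" using s1 s tin by auto
    ultimately have "s = t" using inj tin by (meson inj_on_eq_iff)
    thus False using s by simp
  qed
  show ?case
  proof (rule ccontr)
    assume ne: "mu t \<noteq> t + n div 2"
    hence gt: "t + h < mu t" using c2 by (simp add: h_def)
    have th: "t + h \<in> {1..n}" using less.prems by (auto simp: h_def)
    then obtain r where r: "r \<in> {1..n}" "mu r = t + h" using b
      by (metis bij_betw_def imageE)
    have "r \<noteq> t" using r ne by (auto simp: h_def)
    moreover have "\<not> r < t"
    proof
      assume "r < t"
      hence "mu r = r + h" using less.IH[of r] r less.prems by (auto simp: h_def)
      thus False using r \<open>r < t\<close> by simp
    qed
    ultimately have rt: "t < r" by simp
    have "w_prefers n k x t (mu r) (mu t)"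
      using r gt kh less.prems by (auto simp: w_prefers_def key_w_def lex_less_def h_def)
    moreover have "m_prefers n k y (mu r) t r"
      using r rt less.prems by (auto simp: m_prefers_def key_m_def lex_less_def h_def)
    ultimately show False using block[OF st tin r(1)] by blast
  qed
qed

lemma partC:
  assumes st: "stable n k x y mu" and kh: "k \<le> n div 2" and D: "DISJ k x y"
    and ev: "even n"
  shows "t \<in> {1..n div 2} \<Longrightarrow> mu (t + n div 2) = t"
proof (induction t rule: less_induct)
  case (less t)
  define h where "h = n div 2"
  have nh: "n = h + h" using ev by (auto simp: h_def)
  have tp: "1 \<le> t" "t \<le> h" using less.prems by (auto simp: h_def)
  have hd: "n div 2 = h" by (simp add: h_def)
  have IH: "\<And>y. y < t \<Longrightarrow> 1 \<le> y \<Longrightarrow> mu (y + h) = y"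
    using less.IH tp unfolding h_def by auto
  have b: "bij_betw mu {1..n} {1..n}" using st by (simp add: stable_def perfect_marriage_def)
  hence inj: "inj_on mu {1..n}" by (simp add: bij_betw_def)
  have B: "\<And>s. s \<in> {1..h} \<Longrightarrow> mu s = s + h" using partB[OF st kh D] by (simp add: h_def)
  have tin: "t + h \<in> {1..n}" using tp nh by auto
  have mt: "mu (t+h) \<in> {1..n}" using b tin by (meson bij_betwE)
  have c1: "mu (t+h) \<le> h"
  proof (rule ccontr)
    assume "\<not> mu (t+h) \<le> h"
    hence s: "mu (t+h) = (mu (t+h) - h) + h" "mu (t+h) - h \<in> {1..h}" using mt nh by auto
    define s where "s = mu (t+h) - h"
    note s = s[folded s_def]
    have "mu s = mu (t+h)" using B[OF s(2)] s by simp
    moreover have "s \<in> {1..n}" using s nh by auto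
    ultimately have "s = t + h" using inj tin by (meson inj_on_eq_iff)
    thus False using s tp by simp
  qed
  have c2: "\<not> mu (t+h) < t"
  proof
    assume a: "mu (t+h) < t"
    obtain s where sd: "mu (t+h) = s" by blast
    have st: "s < t" using a sd by simp
    have s1: "s \<ge> 1" using mt sd by simp
    have "mu (s + h) = s" using IH[OF st s1] .
    hence "mu (s+h) = mu (t+h)" using sd by simp
    moreover have "s + h \<in> {1..n}" using s1 st tp nh by simp
    ultimately have "s + h = t + h" using inj tin by (meson inj_on_eq_iff)
    thus False using st by simp
  qed
  show ?case
  proof (rule ccontr)
    assume ne: "mu (t + n div 2) \<noteq> t"
    hence gt: "t < mu (t+h)" using c2 by (simp add: h_def)
    have th: "t \<in> {1..n}" using tp nh by auto
    then obtain r where r: "r \<in> {1..n}" "mu r = t" using b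
      by (metis bij_betw_def imageE)
    have rh: "h < r"
    proof (rule ccontr)
      assume "\<not> h < r"
      hence "mu r = r + h" using B r by auto
      thus False using r tp by simp
    qed
    obtain r' where rd: "r' = r - h" by blast
    have r': "r = r' + h" "r' \<ge> 1" using rh rd by auto
    have "r' \<noteq> t" using r r' ne by (auto simp: h_def)
    moreover have "\<not> r' < t"
    proof
      assume "r' < t"
      hence "mu (r' + h) = r'" using IH[of r'] r' by simp
      thus False using r r' \<open>r' < t\<close> by simp
    qed
    ultimately have rt: "t < r'" by simp
    have "w_prefers n k x (t+h) (mu r) (mu (t+h))"
      using r gt kh tp nh hd by (auto simp: w_prefers_def key_w_def lex_less_def)
    moreover have "m_prefers n k y (mu r) (t+h) r"
      using r r' rt kh tp nh hd by (auto simp: m_prefers_def key_m_def lex_less_def)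
    ultimately show False using block[OF st tin r(1)] by blast
  qed
qed

lemma mu1_noblock:
  assumes nh: "n = h + h" and kh: "k \<le> h" and D: "DISJ k x y" and i: "i\<in>{1..n}" and j: "j\<in>{1..n}"
    and wp: "w_prefers n k x i j (mu1 n i)" and mp: "m_prefers n k y j i (mu1 n j)"
  shows False
proof -
  have hd: "n div 2 = h" using nh by simp
  show False
  proof (cases "h < i")
    case True
    hence "mu1 n i = i - h" by (simp add: mu1_def hd)
    hence "j < i - h" using wp True by (simp add: w_prefers_def key_w_def lex_less_def hd)
    hence jh: "j \<le> h" "j < i - h" "1 \<le> j" using i j nh by auto
    hence "mu1 n j = j + h" by (simp add: mu1_def hd)
    thus False using mp jh kh True by (auto simp: m_prefers_def key_m_def lex_less_def hd split: if_splits)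
  next
    case False
    hence mi: "mu1 n i = i + h" by (simp add: mu1_def hd)
    show False
    proof (cases "h < j")
      case True
      hence "mu1 n j = j - h" by (simp add: mu1_def hd)
      hence "i < j - h" using mp True by (simp add: m_prefers_def key_m_def lex_less_def hd)
      moreover have "j < i + h" using wp mi True False kh i
        by (auto simp: w_prefers_def key_w_def lex_less_def hd split: if_splits)
      ultimately show False by simp
    next
      case jF: False
      hence mj: "mu1 n j = j + h" by (simp add: mu1_def hd)
      have "i \<le> k \<and> j \<le> k \<and> x i j" using wp mi False jF kh i j
        by (auto simp: w_prefers_def key_w_def lex_less_def hd split: if_splits)
      moreover have "y i j" using mp mj False jF kh i j calculation
        by (auto simp: m_prefers_def key_m_def lex_less_def hd split: if_splits)
      ultimately show False using D i j unfolding DISJ_def by auto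
    qed
  qed
qed

lemma mu1_stable:
  assumes ev: "even n" and kh: "k \<le> n div 2" and D: "DISJ k x y"
  shows "stable n k x y (mu1 n)"
proof -
  define h where "h = n div 2"
  have nh: "n = h + h" using ev by (auto simp: h_def)
  have inv: "\<And>i. i \<in> {1..n} \<Longrightarrow> mu1 n (mu1 n i) = i" using nh by (auto simp: mu1_def)
  have rng: "\<And>i. i \<in> {1..n} \<Longrightarrow> mu1 n i \<in> {1..n}" using nh by (auto simp: mu1_def)
  have b: "bij_betw (mu1 n) {1..n} {1..n}"
    by (rule bij_betw_byWitness[where f'="mu1 n"]) (use inv rng in auto)
  hence inj: "inj_on (mu1 n) {1..n}" by (simp add: bij_betw_def)
  have iv: "\<And>j. j \<in> {1..n} \<Longrightarrow> inv_into {1..n} (mu1 n) j = mu1 n j"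
  proof -
    fix j assume j: "j \<in> {1..n}"
    have "inv_into {1..n} (mu1 n) (mu1 n (mu1 n j)) = mu1 n j"
      using inj rng[OF j] by (simp add: inv_into_f_f)
    thus "inv_into {1..n} (mu1 n) j = mu1 n j" using inv[OF j] by simp
  qed
  show ?thesis unfolding stable_def perfect_marriage_def
  proof (intro conjI b notI)
    assume "\<exists>i\<in>{1..n}. \<exists>j\<in>{1..n}. w_prefers n k x i j (mu1 n i) \<and>
           m_prefers n k y j i (inv_into {1..n} (mu1 n) j)"
    then obtain i j where "i\<in>{1..n}" "j\<in>{1..n}" "w_prefers n k x i j (mu1 n i)"
      "m_prefers n k y j i (inv_into {1..n} (mu1 n) j)" by blast
    thus False using iv mu1_noblock[OF nh kh[folded h_def] D] by metis
  qed
qed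

lemma kh_lemma:
  fixes n k :: nat and \<delta> :: real
  assumes "0 < \<delta>" "\<delta> \<le> 1" "even n" "real k = \<delta> * real n / 2"
  shows "k \<le> n div 2"
proof -
  have "\<delta> * real n \<le> real n" using assms(1,2) by (simp add: mult_left_le_one_le)
  hence "real k \<le> real n / 2" using assms(4) by simp
  moreover have "real (n div 2) = real n / 2" using assms(3) by (auto elim: evenE)
  ultimately show ?thesis by linarith
qed

lemma uniq:
  assumes st: "stable n k x y mu" and kh: "k \<le> n div 2" and D: "DISJ k x y"
    and ev: "even n" and i: "i \<in> {1..n}"
  shows "mu i = mu1 n i"
proof (cases "i \<le> n div 2")
  case True
  thus ?thesis using partB[OF st kh D, of i] i by (auto simp: mu1_def)
next
  case False
  have "n = 2 * (n div 2)" using ev by simp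
  hence "i - n div 2 \<in> {1..n div 2}" using i False by auto
  from partC[OF st kh D ev this] False
  show ?thesis by (auto simp: mu1_def)
qed

thm_deps block cross partB partC mu1_noblock mu1_stable kh_lemma uniq

theorem lemma16:
  fixes n :: nat and \<delta> :: real and k :: nat
    and x y :: "nat \<Rightarrow> nat \<Rightarrow> bool"
  assumes "0 < \<delta>" and "\<delta> \<le> 1"
    and "even n"
    and "real k = \<delta> * real n / 2"
    and "DISJ k x y"
  shows "stable n k x y (mu1 n) \<and>
         (\<forall>mu. stable n k x y mu \<longrightarrow> (\<forall>i\<in>{1..n}. mu i = mu1 n i))"
  using mu1_stable[OF assms(3) kh_lemma[OF assms(1-4)] assms(5)]
    uniq[OF _ kh_lemma[OF assms(1-4)] assms(5) assms(3)] by blast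

end
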